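(* Let $<$ be an ordering of $\mathbb{F}_m$ preserved by the Artin automorphism of $\alpha\in B_m$, and $<'$ an ordering of $\mathbb{F}_n$ preserved by the Artin automorphism of $\beta\in B_n$. Let $\prec$ be the ordering of $\mathbb{F}_m*\mathbb{F}_n\cong\mathbb{F}_{m+n}$ constructed from $(\mathbb{F}_m,<)$ and $(\mathbb{F}_n,<')$ as in the context. Then the Artin automorphism of $\alpha\otimes\beta\in B_{m+n}$ preserves $\prec$.
   Context: $B_n$ is the braid group with generators $\sigma_1,\dots,\sigma_{n-1}$; the Artin representation $B_n\to\mathrm{Aut}(\mathbb{F}_n)$ ($\mathbb{F}_n$ free on $x_1,\dots,x_n$) sends $\sigma_i$ to $x_i\mapsto x_ix_{i+1}x_i^{-1}$, $x_{i+1}\mapsto x_i$, $x_j\mapsto x_j$ otherwise. Orderings are strict total orders invariant under left and right multiplication. $\alpha\otimes\beta\in B_{m+n}$ is the side-by-side braid, image of $(\alpha,\beta)$ under $B_m\times B_n\to B_{m+n}$, $\sigma_i\mapsto\sigma_i$ (first factor), $\sigma_j\mapsto\sigma_{m+j}$ (second factor). Identify $\mathbb{F}_m*\mathbb{F}_n$ with $\mathbb{F}_{m+n}$ by sending the generators of $\mathbb{F}_m$ to $x_1,\dots,x_m$ and those of $\mathbb{F}_n$ to $x_{m+1},\dots,x_{m+n}$. Construction of $\prec$ on $F*G$ from orderings $<_F,<_G$: order $F\times G$ lexicographically ($(f,g)<(f',g')$ iff $f<_Ff'$, or $f=f'$ and $g<_Gg'$); in $R=\mathbb{Z}(F\times G)$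 a nonzero element is positive if the coefficient of its largest group element is a positive integer; $\rho\colon F*G\to M_2(R[t])$ is the injective homomorphism with $\rho(f)=\begin{pmatrix} f&(f-1)t\\0&1\end{pmatrix}$, $\rho(g)=\begin{pmatrix}1&0\\(g-1)t&g\end{pmatrix}$; order matrix positions $(1,1)$, $(2,2)$, then the off-diagonal ones in a fixed order; a nonzero $M=\sum_iM_it^i$ is positive if for the least $n$ with $M_n\ne0$ the first nonzero entry of $M_n$ is positive in $R$; $x\prec y$ iff $\rho(y)-\rho(x)$ is positive. *)

theory Defs
  imports Main
begin

text \<open>A letter (k, b) stands for the generator x_(k+1) if b = False and for its
inverse if b = True (generators are indexed from 0).\<close>

type_synonym letter = "nat \<times> bool"
type_synonym word = "letter list"

fun red_cons :: "letter \<Rightarrow> word \<Rightarrow> word" where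
  "red_cons a [] = [a]"
| "red_cons a (b # w) = (if fst a = fst b \<and> snd a \<noteq> snd b then w else a # b # w)"

definition reduce :: "word \<Rightarrow> word" where
  "reduce w = foldr red_cons w []"

fun reduced :: "word \<Rightarrow> bool" where
  "reduced [] = True"
| "reduced [a] = True"
| "reduced (a # b # w) = (\<not> (fst a = fst b \<and> snd a \<noteq> snd b) \<and> reduced (b # w))"

definition free_group :: "nat \<Rightarrow> word set" where
  "free_group n = {w. reduced w \<and> (\<forall>a\<in>set w. fst a < n)}"

definition fmul :: "word \<Rightarrow> word \<Rightarrow> word" where
  "fmul u v = reduce (u @ v)"

definition finv :: "word \<Rightarrow> word" where
  "finv w = rev (map (\<lambda>(k, b). (k, \<not> b)) w)"

definition bi_order :: "nat \<Rightarrow> (word \<Rightarrow> word \<Rightarrow> bool) \<Rightarrow> bool" where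
  "bi_order n lt \<longleftrightarrow>
     (\<forall>x\<in>free_group n. \<not> lt x x) \<and>
     (\<forall>x\<in>free_group n. \<forall>y\<in>free_group n. \<forall>z\<in>free_group n. lt x y \<longrightarrow> lt y z \<longrightarrow> lt x z) \<and>
     (\<forall>x\<in>free_group n. \<forall>y\<in>free_group n. x \<noteq> y \<longrightarrow> lt x y \<or> lt y x) \<and>
     (\<forall>x\<in>free_group n. \<forall>y\<in>free_group n. \<forall>z\<in>free_group n.
        lt x y \<longrightarrow> lt (fmul z x) (fmul z y) \<and> lt (fmul x z) (fmul y z))"

text \<open>A braid word is a list of letters (i, b) standing for sigma_(i+1) (b = False)
or its inverse (b = True).  It is a word in the generators of B_n iff Suc (Suc i) \<le> n
for all its letters, i.e. 1 \<le> i+1 \<le> n-1.\<close>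

definition braid_word :: "nat \<Rightarrow> letter list \<Rightarrow> bool" where
  "braid_word n bw \<longleftrightarrow> (\<forall>a\<in>set bw. Suc (fst a) < n)"

fun sigma_img :: "letter \<Rightarrow> nat \<Rightarrow> word" where
  "sigma_img (i, False) j =
     (if j = i then [(i, False), (Suc i, False), (i, True)]
      else if j = Suc i then [(i, False)] else [(j, False)])"
| "sigma_img (i, True) j =
     (if j = i then [(Suc i, False)]
      else if j = Suc i then [(Suc i, True), (i, False), (Suc i, False)] else [(j, False)])"

definition subst :: "(nat \<Rightarrow> word) \<Rightarrow> word \<Rightarrow> word" where
  "subst s w = reduce (concat (map (\<lambda>(j, b). if b then finv (s j) else s j) w))"

text \<open>The Artin automorphism of a braid word: the representation is a homomorphism,
so the automorphism of a_1 ... a_k is phi(a_1) o ... o phi(a_k).\<close>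
definition artin :: "letter list \<Rightarrow> word \<Rightarrow> word" where
  "artin bw w = foldr (\<lambda>a v. subst (sigma_img a) v) bw w"

definition braid_tensor :: "nat \<Rightarrow> letter list \<Rightarrow> letter list \<Rightarrow> letter list" where
  "braid_tensor m bw1 bw2 = bw1 @ map (\<lambda>(i, b). (i + m, b)) bw2"

definition preserves :: "nat \<Rightarrow> (word \<Rightarrow> word \<Rightarrow> bool) \<Rightarrow> letter list \<Rightarrow> bool" where
  "preserves n lt bw \<longleftrightarrow>
     (\<forall>x\<in>free_group n. \<forall>y\<in>free_group n. lt x y \<longrightarrow> lt (artin bw x) (artin bw y))"

text \<open>Elements of R = Z(F x G) are finitely supported functions (word \<times> word) \<Rightarrow> int,
where the pair (f, g) is an element of F_m \<times> F_n.  An element of M_2(R[t]) is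
represented as M i j k = coefficient of t^k in entry (i,j) (i, j \<in> {0,1}).\<close>

type_synonym ring_el = "word \<times> word \<Rightarrow> int"
type_synonym matrix = "nat \<Rightarrow> nat \<Rightarrow> nat \<Rightarrow> ring_el"

definition pmul :: "word \<times> word \<Rightarrow> word \<times> word \<Rightarrow> word \<times> word" where
  "pmul p q = (fmul (fst p) (fst q), fmul (snd p) (snd q))"

definition rmul :: "ring_el \<Rightarrow> ring_el \<Rightarrow> ring_el" where
  "rmul r s h = (\<Sum>pq \<in> {pq. pmul (fst pq) (snd pq) = h \<and> r (fst pq) \<noteq> 0 \<and> s (snd pq) \<noteq> 0}.
                    r (fst pq) * s (snd pq))"

definition delta :: "word \<times> word \<Rightarrow> ring_el" where
  "delta p = (\<lambda>h. if h = p then 1 else 0)"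

definition mat_mult :: "matrix \<Rightarrow> matrix \<Rightarrow> matrix" where
  "mat_mult M N i j k h = (\<Sum>l<2. \<Sum>a\<le>k. rmul (M i l a) (N l j (k - a)) h)"

definition mat_one :: matrix where
  "mat_one i j k = (if i = j \<and> k = 0 then delta ([], []) else (\<lambda>_. 0))"

definition mat_sub :: "matrix \<Rightarrow> matrix \<Rightarrow> matrix" where
  "mat_sub M N i j k h = M i j k h - N i j k h"

text \<open>rho(f) = [[f, (f-1)t],[0,1]] for f in F_m.\<close>
definition rhoF :: "word \<Rightarrow> matrix" where
  "rhoF f i j k =
     (if i = 0 \<and> j = 0 \<and> k = 0 then delta (f, [])
      else if i = 0 \<and> j = 1 \<and> k = 1 then (\<lambda>h. delta (f, []) h - delta ([], []) h)
      else if i = 1 \<and> j = 1 \<and> k = 0 then delta ([], [])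
      else (\<lambda>_. 0))"

text \<open>rho(g) = [[1, 0],[(g-1)t, g]] for g in F_n.\<close>
definition rhoG :: "word \<Rightarrow> matrix" where
  "rhoG g i j k =
     (if i = 0 \<and> j = 0 \<and> k = 0 then delta ([], [])
      else if i = 1 \<and> j = 0 \<and> k = 1 then (\<lambda>h. delta ([], g) h - delta ([], []) h)
      else if i = 1 \<and> j = 1 \<and> k = 0 then delta ([], g)
      else (\<lambda>_. 0))"

text \<open>Under F_m * F_n = F_(m+n), a letter with index k < m is a letter of F_m, and a
letter with index k \<ge> m is the letter with index k - m of F_n.\<close>
definition rho_letter :: "nat \<Rightarrow> letter \<Rightarrow> matrix" where
  "rho_letter m a = (if fst a < m then rhoF [a] else rhoG [(fst a - m, snd a)])"

definition rho :: "nat \<Rightarrow> word \<Rightarrow> matrix" where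
  "rho m w = foldr mat_mult (map (rho_letter m) w) mat_one"

definition lex_lt :: "(word \<Rightarrow> word \<Rightarrow> bool) \<Rightarrow> (word \<Rightarrow> word \<Rightarrow> bool)
                      \<Rightarrow> word \<times> word \<Rightarrow> word \<times> word \<Rightarrow> bool" where
  "lex_lt lt1 lt2 p q \<longleftrightarrow> lt1 (fst p) (fst q) \<or> (fst p = fst q \<and> lt2 (snd p) (snd q))"

definition rpos :: "(word \<Rightarrow> word \<Rightarrow> bool) \<Rightarrow> (word \<Rightarrow> word \<Rightarrow> bool) \<Rightarrow> ring_el \<Rightarrow> bool" where
  "rpos lt1 lt2 r \<longleftrightarrow>
     (\<exists>h. r h > 0 \<and> (\<forall>h'. r h' \<noteq> 0 \<longrightarrow> h' = h \<or> lex_lt lt1 lt2 h' h))"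

text \<open>Matrix positions in the order (1,1), (2,2), (1,2), (2,1) (0-based below).\<close>
definition positions :: "(nat \<times> nat) list" where
  "positions = [(0, 0), (1, 1), (0, 1), (1, 0)]"

definition mat_pos :: "(word \<Rightarrow> word \<Rightarrow> bool) \<Rightarrow> (word \<Rightarrow> word \<Rightarrow> bool) \<Rightarrow> matrix \<Rightarrow> bool" where
  "mat_pos lt1 lt2 M \<longleftrightarrow>
     (\<exists>k i j. (\<forall>k'<k. \<forall>(i', j')\<in>set positions. M i' j' k' = (\<lambda>_. 0)) \<and>
              find (\<lambda>(i', j'). M i' j' k \<noteq> (\<lambda>_. 0)) positions = Some (i, j) \<and>
              rpos lt1 lt2 (M i j k))"

definition prec :: "nat \<Rightarrow> (word \<Rightarrow> word \<Rightarrow> bool) \<Rightarrow> (word \<Rightarrow> word \<Rightarrow> bool)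
                    \<Rightarrow> word \<Rightarrow> word \<Rightarrow> bool" where
  "prec m lt1 lt2 x y \<longleftrightarrow> mat_pos lt1 lt2 (mat_sub (rho m y) (rho m x))"

end

theory Submission
  imports Defs
begin


definition linv :: "letter \<Rightarrow> letter" where "linv a = (fst a, \<not> snd a)"

lemma linv_linv[simp]: "linv (linv a) = a" by (simp add: linv_def)
lemma fst_linv[simp]: "fst (linv a) = fst a" by (simp add: linv_def)
lemma snd_linv[simp]: "snd (linv a) = (\<not> snd a)" by (simp add: linv_def)

lemma red_cons_Cons: "red_cons a (b # w) = (if b = linv a then w else a # b # w)"
  by (cases a; cases b) (auto simp: linv_def)

declare red_cons.simps(2)[simp del]

lemma reduced_Cons2: "reduced (a # b # w) \<longleftrightarrow> b \<noteq> linv a \<and> reduced (b # w)"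
  by (cases a; cases b) (auto simp: linv_def)

declare reduced.simps(3)[simp del]

lemma reduced_tl: "reduced (a # w) \<Longrightarrow> reduced w"
  by (cases w) (auto simp: reduced_Cons2)

lemma reduced_red_cons: "reduced w \<Longrightarrow> reduced (red_cons a w)"
proof (cases w)
  case (Cons b w')
  assume "reduced w"
  then show ?thesis using Cons
    by (cases "b = linv a") (auto simp: red_cons_Cons reduced_Cons2 dest: reduced_tl)
qed simp

lemma reduce_Nil[simp]: "reduce [] = []" by (simp add: reduce_def)
lemma reduce_Cons: "reduce (a # w) = red_cons a (reduce w)" by (simp add: reduce_def)

lemma reduced_reduce: "reduced (reduce w)"
  by (induction w) (auto simp: reduce_Cons reduced_red_cons)

lemma reduce_reduced: "reduced w \<Longrightarrow> reduce w = w"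
proof (induction w)
  case (Cons a w)
  then have "reduce w = w" using reduced_tl by blast
  then show ?case using Cons.prems
    by (cases w) (auto simp: reduce_Cons red_cons_Cons reduced_Cons2)
qed simp

lemma reduce_idem[simp]: "reduce (reduce w) = reduce w"
  by (simp add: reduce_reduced reduced_reduce)

lemma set_red_cons: "set (red_cons a w) \<subseteq> insert a (set w)"
  by (cases w) (auto simp: red_cons_Cons)

lemma set_reduce: "set (reduce w) \<subseteq> set w"
  by (induction w) (auto simp: reduce_Cons dest!: set_red_cons[THEN subsetD])

lemma red_cons_cancel: "reduced w \<Longrightarrow> red_cons (linv a) (red_cons a w) = w"
proof (cases w)
  case Nil then show ?thesis by (simp add: red_cons_Cons)
next
  case (Cons b w')
  assume r: "reduced w"
  show ?thesis
  proof (cases "b = linv a")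
    case True
    then show ?thesis using r Cons
      by (cases w') (auto simp: red_cons_Cons reduced_Cons2)
  next
    case False then show ?thesis using Cons by (simp add: red_cons_Cons)
  qed
qed

lemma red_cons_cancel': "reduced w \<Longrightarrow> red_cons a (red_cons (linv a) w) = w"
  using red_cons_cancel[of w "linv a"] by simp

lemma reduced_foldr: "reduced w \<Longrightarrow> reduced (foldr red_cons u w)"
  by (induction u) (auto simp: reduced_red_cons)

lemma reduce_append: "reduce (u @ v) = foldr red_cons u (reduce v)"
  by (simp add: reduce_def)

lemma foldr_reduce: "reduced w \<Longrightarrow> foldr red_cons (reduce u) w = foldr red_cons u w"
proof (induction u)
  case Nil then show ?case by simp
next
  case (Cons a u)
  have IH: "foldr red_cons (reduce u) w = foldr red_cons u w" using Cons by blast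
  show ?case
  proof (cases "reduce u")
    case Nil
    then show ?thesis using IH by (simp add: reduce_Cons)
  next
    case (Cons b x)
    show ?thesis
    proof (cases "b = linv a")
      case False
      then show ?thesis using Cons IH by (simp add: reduce_Cons red_cons_Cons)
    next
      case True
      have "foldr red_cons u w = red_cons b (foldr red_cons x w)"
        using IH Cons by simp
      then have "red_cons a (foldr red_cons u w) = foldr red_cons x w"
        using True red_cons_cancel'[OF reduced_foldr[OF Cons.prems, of x], of a] by simp
      then show ?thesis using Cons True by (simp add: reduce_Cons red_cons_Cons)
    qed
  qed
qed

lemma reduce_left: "reduce (reduce u @ v) = reduce (u @ v)"
  by (simp add: reduce_append foldr_reduce reduced_reduce)

lemma reduce_right: "reduce (u @ reduce v) = reduce (u @ v)"
  by (simp add: reduce_append)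

lemma fmul_assoc: "fmul (fmul u v) w = fmul u (fmul v w)"
  unfolding fmul_def by (metis append_assoc reduce_left reduce_right)

lemma finv_Cons: "finv (a # w) = finv w @ [linv a]"
  by (cases a) (simp add: finv_def linv_def)

lemma finv_Nil[simp]: "finv [] = []" by (simp add: finv_def)

lemma finv_finv[simp]: "finv (finv w) = w"
  by (induction w) (auto simp: finv_Cons finv_def linv_def rev_map)

lemma reduce_finv_right: "reduce (w @ finv w) = []"
proof (induction w)
  case (Cons a w)
  have "reduce ((a # w) @ finv (a # w)) = red_cons a (reduce ((w @ finv w) @ [linv a]))"
    by (simp add: finv_Cons reduce_Cons)
  also have "reduce ((w @ finv w) @ [linv a]) = reduce (reduce (w @ finv w) @ [linv a])"
    by (simp add: reduce_left)
  also have "\<dots> = [linv a]" using Cons by (simp add: reduce_Cons)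
  finally show ?case by (simp add: red_cons_Cons)
qed simp

lemma reduce_finv_left: "reduce (finv w @ w) = []"
  using reduce_finv_right[of "finv w"] by simp

lemma fmul_Nil_left: "reduced w \<Longrightarrow> fmul [] w = w"
  by (simp add: fmul_def reduce_reduced)
lemma fmul_Nil_right: "reduced w \<Longrightarrow> fmul w [] = w"
  by (simp add: fmul_def reduce_reduced)

lemma free_group_fmul: "u \<in> free_group n \<Longrightarrow> v \<in> free_group n \<Longrightarrow> fmul u v \<in> free_group n"
  unfolding free_group_def fmul_def using set_reduce reduced_reduce by fastforce




definition shat :: "(nat \<Rightarrow> word) \<Rightarrow> letter \<Rightarrow> word" where
  "shat s a = (if snd a then finv (s (fst a)) else s (fst a))"

lemma subst_shat: "subst s w = reduce (concat (map (shat s) w))"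
proof -
  have "(\<lambda>(j, b). if b then finv (s j) else s j) = shat s"
    by (auto simp: shat_def)
  then show ?thesis by (simp add: subst_def)
qed

lemma shat_linv: "shat s (linv a) = finv (shat s a)"
  by (simp add: shat_def)

lemma cw_red_cons:
  "reduce (concat (map (shat s) (red_cons a x))) = reduce (shat s a @ concat (map (shat s) x))"
proof (cases x)
  case Nil then show ?thesis by simp
next
  case (Cons b x')
  show ?thesis
  proof (cases "b = linv a")
    case True
    have "reduce (shat s a @ concat (map (shat s) x))
        = reduce ((shat s a @ finv (shat s a)) @ concat (map (shat s) x'))"
      using Cons True by (simp add: shat_linv)
    also have "\<dots> = reduce (concat (map (shat s) x'))"
      by (metis reduce_left reduce_finv_right append.left_neutral)
    finally show ?thesis using Cons True by (simp add: red_cons_Cons)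
  next
    case False then show ?thesis using Cons by (simp add: red_cons_Cons)
  qed
qed

lemma cw_reduce: "reduce (concat (map (shat s) (reduce w))) = reduce (concat (map (shat s) w))"
proof (induction w)
  case (Cons a w)
  have "reduce (concat (map (shat s) (reduce (a # w))))
      = reduce (shat s a @ concat (map (shat s) (reduce w)))"
    by (simp add: reduce_Cons cw_red_cons)
  also have "\<dots> = reduce (shat s a @ reduce (concat (map (shat s) (reduce w))))"
    by (simp add: reduce_right)
  also have "\<dots> = reduce (shat s a @ concat (map (shat s) w))"
    using Cons by (simp add: reduce_right)
  finally show ?case by simp
qed simp

lemma subst_reduce: "subst s (reduce w) = subst s w"
  by (simp add: subst_shat cw_reduce)

lemma subst_fmul: "subst s (fmul u v) = fmul (subst s u) (subst s v)"
proof -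
  have "subst s (fmul u v) = reduce (concat (map (shat s) u) @ concat (map (shat s) v))"
    by (simp only: fmul_def subst_reduce) (simp add: subst_shat)
  also have "\<dots> = fmul (subst s u) (subst s v)"
    by (simp add: fmul_def subst_shat reduce_left reduce_right)
  finally show ?thesis .
qed

lemma subst_Nil[simp]: "subst s [] = []" by (simp add: subst_def)

lemma artin_Nil_bw[simp]: "artin [] w = w" by (simp add: artin_def)
lemma artin_Cons_bw: "artin (a # bw) w = subst (sigma_img a) (artin bw w)"
  by (simp add: artin_def)
lemma artin_append: "artin (xs @ ys) w = artin xs (artin ys w)"
  by (simp add: artin_def)

lemma artin_fmul: "artin bw (fmul u v) = fmul (artin bw u) (artin bw v)"
  by (induction bw) (simp_all add: artin_Cons_bw subst_fmul)

lemma artin_Nil[simp]: "artin bw [] = []"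
  by (induction bw) (simp_all add: artin_Cons_bw)

lemma sigma_img_other: "j \<noteq> fst c \<Longrightarrow> j \<noteq> Suc (fst c) \<Longrightarrow> sigma_img c j = [(j, False)]"
  by (cases c; cases "snd c") auto

lemma subst_id: "(\<forall>a\<in>set w. fst a \<noteq> fst c \<and> fst a \<noteq> Suc (fst c)) \<Longrightarrow>
   subst (sigma_img c) w = reduce w"
proof -
  assume H: "\<forall>a\<in>set w. fst a \<noteq> fst c \<and> fst a \<noteq> Suc (fst c)"
  have "\<forall>a\<in>set w. shat (sigma_img c) a = [a]"
    using H by (auto simp: shat_def sigma_img_other finv_def)
  then have "concat (map (shat (sigma_img c)) w) = w"
    by (induction w) auto
  then show ?thesis by (simp add: subst_shat)
qed

lemma artin_id: "(\<forall>c\<in>set bw. \<forall>a\<in>set w. fst a \<noteq> fst c \<and> fst a \<noteq> Suc (fst c)) \<Longrightarrow>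
   reduced w \<Longrightarrow> artin bw w = w"
  by (induction bw) (auto simp: artin_Cons_bw subst_id reduce_reduced)

lemma set_finv: "set (finv w) = linv ` set w"
  by (induction w) (auto simp: finv_Cons)

lemma finv_bound: "(\<forall>a\<in>set x. fst a < m) \<Longrightarrow> (\<forall>a\<in>set (finv x). fst a < m)"
  by (auto simp: set_finv)

lemma artin_bound: "braid_word m bw \<Longrightarrow> (\<forall>a\<in>set w. fst a < m) \<Longrightarrow>
   (\<forall>a\<in>set (artin bw w). fst a < m)"
proof (induction bw)
  case (Cons c bw)
  have bc: "Suc (fst c) < m" and bw: "braid_word m bw"
    using Cons.prems by (auto simp: braid_word_def)
  have IH: "\<forall>a\<in>set (artin bw w). fst a < m" using Cons bw by blast
  have si: "\<forall>j. j < m \<longrightarrow> (\<forall>a\<in>set (sigma_img c j). fst a < m)"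
    using bc by (cases c; cases "snd c") auto
  have "\<forall>a\<in>set (shat (sigma_img c) b). fst a < m" if "b \<in> set (artin bw w)" for b
    using IH si that finv_bound[of "sigma_img c (fst b)" m] by (auto simp: shat_def)
  then have "\<forall>a\<in>set (concat (map (shat (sigma_img c)) (artin bw w))). fst a < m"
    by (simp only: set_concat set_map) blast
  then show ?case unfolding artin_Cons_bw subst_shat
    using set_reduce by blast
qed simp

lemma artin_reduced: "reduced w \<Longrightarrow> reduced (artin bw w)"
  by (cases bw) (auto simp: artin_Cons_bw subst_def reduced_reduce)

lemma artin_free: "braid_word m bw \<Longrightarrow> w \<in> free_group m \<Longrightarrow> artin bw w \<in> free_group m"
  unfolding free_group_def using artin_bound artin_reduced by blast

definition sh :: "nat \<Rightarrow> letter \<Rightarrow> letter" where "sh m a = (fst a + m, snd a)"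

lemma fst_sh[simp]: "fst (sh m a) = fst a + m" by (simp add: sh_def)
lemma snd_sh[simp]: "snd (sh m a) = snd a" by (simp add: sh_def)

lemma sh_inj: "sh m a = sh m b \<longleftrightarrow> a = b"
  by (cases a; cases b) (auto simp: sh_def)
lemma sh_linv: "linv (sh m a) = sh m (linv a)" by (simp add: sh_def linv_def)

lemma red_cons_sh: "red_cons (sh m a) (map (sh m) w) = map (sh m) (red_cons a w)"
  by (cases w) (auto simp: red_cons_Cons sh_inj sh_linv)

lemma reduce_sh: "reduce (map (sh m) w) = map (sh m) (reduce w)"
  by (induction w) (simp_all add: reduce_Cons red_cons_sh)

lemma finv_sh: "finv (map (sh m) w) = map (sh m) (finv w)"
  by (simp add: finv_def rev_map sh_def case_prod_beta)

lemma sigma_img_sh: "sigma_img (sh m c) (j + m) = map (sh m) (sigma_img c j)"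
  by (cases c; cases "snd c") (auto simp: sh_def)

lemma subst_sh: "subst (sigma_img (sh m c)) (map (sh m) w) = map (sh m) (subst (sigma_img c) w)"
proof -
  have "shat (sigma_img (sh m c)) (sh m a) = map (sh m) (shat (sigma_img c) a)" for a
    by (simp add: shat_def sigma_img_sh finv_sh)
  then have "concat (map (shat (sigma_img (sh m c))) (map (sh m) w))
       = map (sh m) (concat (map (shat (sigma_img c)) w))"
    by (induction w) auto
  then show ?thesis by (simp add: subst_shat reduce_sh)
qed

lemma artin_sh: "artin (map (sh m) bw) (map (sh m) w) = map (sh m) (artin bw w)"
  by (induction bw) (simp_all add: artin_Cons_bw subst_sh)

lemma braid_tensor_sh: "braid_tensor m \<alpha> \<beta> = \<alpha> @ map (sh m) \<beta>"
  by (simp add: braid_tensor_def sh_def case_prod_beta)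




definition rsupp :: "ring_el \<Rightarrow> (word \<times> word) set" where "rsupp r = {h. r h \<noteq> 0}"

lemma rmul_eq:
  assumes "finite A" "finite B" "rsupp r \<subseteq> A" "rsupp s \<subseteq> B"
  shows "rmul r s h = (\<Sum>p\<in>A. \<Sum>q\<in>B. r p * s q * delta (pmul p q) h)"
proof -
  let ?S = "{pq. pmul (fst pq) (snd pq) = h \<and> r (fst pq) \<noteq> 0 \<and> s (snd pq) \<noteq> 0}"
  have sub: "?S \<subseteq> A \<times> B" using assms(3,4) by (auto simp: rsupp_def)
  have "(\<Sum>p\<in>A. \<Sum>q\<in>B. r p * s q * delta (pmul p q) h)
      = (\<Sum>pq\<in>A \<times> B. r (fst pq) * s (snd pq) * delta (pmul (fst pq) (snd pq)) h)"
    by (simp add: sum.cartesian_product case_prod_beta)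
  also have "\<dots> = (\<Sum>pq\<in>?S. r (fst pq) * s (snd pq))"
    by (rule sum.mono_neutral_cong_right) (use assms sub in \<open>auto simp: delta_def\<close>)
  finally show ?thesis by (simp add: rmul_def)
qed

lemma rsupp_rmul: "rsupp (rmul r s) \<subseteq> (\<lambda>pq. pmul (fst pq) (snd pq)) ` (rsupp r \<times> rsupp s)"
proof
  fix h assume "h \<in> rsupp (rmul r s)"
  then have "rmul r s h \<noteq> 0" by (simp add: rsupp_def)
  moreover have "rmul r s h = (\<Sum>pq\<in>{pq. pmul (fst pq) (snd pq) = h \<and> r (fst pq) \<noteq> 0 \<and> s (snd pq) \<noteq> 0}. r (fst pq) * s (snd pq))"
    by (rule rmul_def)
  ultimately have "{pq. pmul (fst pq) (snd pq) = h \<and> r (fst pq) \<noteq> 0 \<and> s (snd pq) \<noteq> 0} \<noteq> {}"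
    by (intro notI) simp
  then obtain pq where "pmul (fst pq) (snd pq) = h" "r (fst pq) \<noteq> 0" "s (snd pq) \<noteq> 0"
    by blast
  then show "h \<in> (\<lambda>pq. pmul (fst pq) (snd pq)) ` (rsupp r \<times> rsupp s)"
    by (intro image_eqI[of _ _ pq]) (auto simp: rsupp_def mem_Times_iff)
qed

lemma finite_rsupp_rmul: "finite (rsupp r) \<Longrightarrow> finite (rsupp s) \<Longrightarrow> finite (rsupp (rmul r s))"
  by (rule finite_subset[OF rsupp_rmul]) auto

lemma delta_same[simp]: "delta p p = 1" by (simp add: delta_def)

lemma rsupp_delta: "rsupp (delta p) = {p}" by (auto simp: rsupp_def delta_def)

lemma rsupp_lin: "rsupp (\<lambda>h. \<Sum>i\<in>I. c i * f i h) \<subseteq> (\<Union>i\<in>I. rsupp (f i))"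
proof
  fix h assume "h \<in> rsupp (\<lambda>h. \<Sum>i\<in>I. c i * f i h)"
  then have "(\<Sum>i\<in>I. c i * f i h) \<noteq> 0" by (simp add: rsupp_def)
  then obtain i where "i \<in> I" "c i * f i h \<noteq> 0" by (rule sum.not_neutral_contains_not_neutral)
  then show "h \<in> (\<Union>i\<in>I. rsupp (f i))" by (auto simp: rsupp_def)
qed

lemma finite_rsupp_lin: "finite I \<Longrightarrow> (\<forall>i\<in>I. finite (rsupp (f i))) \<Longrightarrow>
  finite (rsupp (\<lambda>h. \<Sum>i\<in>I. c i * f i h))"
  by (rule finite_subset[OF rsupp_lin]) auto

lemma swap3: "(\<Sum>p\<in>A. \<Sum>q\<in>B. \<Sum>i\<in>I. g p q i) = (\<Sum>i\<in>I. \<Sum>p\<in>A. \<Sum>q\<in>B. g p q i)"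
proof -
  have "(\<Sum>p\<in>A. \<Sum>q\<in>B. \<Sum>i\<in>I. g p q i) = (\<Sum>p\<in>A. \<Sum>i\<in>I. \<Sum>q\<in>B. g p q i)"
    by (rule sum.cong[OF refl], rule sum.swap)
  also have "\<dots> = (\<Sum>i\<in>I. \<Sum>p\<in>A. \<Sum>q\<in>B. g p q i)" by (rule sum.swap)
  finally show ?thesis .
qed

lemma rmul_lin_left:
  assumes I: "finite I" and f: "\<forall>i\<in>I. finite (rsupp (f i))" and s: "finite (rsupp s)"
  shows "rmul (\<lambda>h. \<Sum>i\<in>I. c i * f i h) s h0 = (\<Sum>i\<in>I. c i * rmul (f i) s h0)"
proof -
  define A where "A = (\<Union>i\<in>I. rsupp (f i))"
  have A: "finite A" using I f by (simp add: A_def)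
  have "rmul (\<lambda>h. \<Sum>i\<in>I. c i * f i h) s h0
      = (\<Sum>p\<in>A. \<Sum>q\<in>rsupp s. (\<Sum>i\<in>I. c i * f i p) * s q * delta (pmul p q) h0)"
    using A s rsupp_lin[of c f I] by (intro rmul_eq) (auto simp: A_def)
  also have "\<dots> = (\<Sum>p\<in>A. \<Sum>q\<in>rsupp s. \<Sum>i\<in>I. c i * (f i p * s q * delta (pmul p q) h0))"
    by (simp add: sum_distrib_right mult.assoc)
  also have "\<dots> = (\<Sum>i\<in>I. c i * (\<Sum>p\<in>A. \<Sum>q\<in>rsupp s. f i p * s q * delta (pmul p q) h0))"
    by (simp only: sum_distrib_left) (rule swap3)
  also have "\<dots> = (\<Sum>i\<in>I. c i * rmul (f i) s h0)"
    using A s by (intro sum.cong refl arg_cong2[where f="(*)"] rmul_eq[symmetric]) (auto simp: A_def)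
  finally show ?thesis .
qed

lemma rmul_lin_right:
  assumes I: "finite I" and f: "\<forall>i\<in>I. finite (rsupp (f i))" and r: "finite (rsupp r)"
  shows "rmul r (\<lambda>h. \<Sum>i\<in>I. c i * f i h) h0 = (\<Sum>i\<in>I. c i * rmul r (f i) h0)"
proof -
  define B where "B = (\<Union>i\<in>I. rsupp (f i))"
  have B: "finite B" using I f by (simp add: B_def)
  have "rmul r (\<lambda>h. \<Sum>i\<in>I. c i * f i h) h0
      = (\<Sum>p\<in>rsupp r. \<Sum>q\<in>B. r p * (\<Sum>i\<in>I. c i * f i q) * delta (pmul p q) h0)"
    using B r rsupp_lin[of c f I] by (intro rmul_eq) (auto simp: B_def)
  also have "\<dots> = (\<Sum>p\<in>rsupp r. \<Sum>q\<in>B. \<Sum>i\<in>I. c i * (r p * f i q * delta (pmul p q) h0))"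
    by (simp add: sum_distrib_right sum_distrib_left mult_ac)
  also have "\<dots> = (\<Sum>i\<in>I. c i * (\<Sum>p\<in>rsupp r. \<Sum>q\<in>B. r p * f i q * delta (pmul p q) h0))"
    by (simp only: sum_distrib_left) (rule swap3)
  also have "\<dots> = (\<Sum>i\<in>I. c i * rmul r (f i) h0)"
    using B r by (intro sum.cong refl arg_cong2[where f="(*)"] rmul_eq[symmetric]) (auto simp: B_def)
  finally show ?thesis .
qed

lemma rmul_delta: "rmul (delta p) (delta q) = delta (pmul p q)"
  by (rule ext, subst rmul_eq[of "{p}" "{q}"]) (simp_all add: rsupp_delta)

lemma expand: "finite R \<Longrightarrow> rsupp r \<subseteq> R \<Longrightarrow> r = (\<lambda>h. \<Sum>p\<in>R. r p * delta p h)"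
proof (rule ext)
  fix h assume R: "finite R" "rsupp r \<subseteq> R"
  have "(\<Sum>p\<in>R. r p * delta p h) = (\<Sum>p\<in>R. if p = h then r p else 0)"
    by (rule sum.cong) (auto simp: delta_def)
  also have "\<dots> = (if h \<in> R then r h else 0)" using R by (simp add: sum.delta)
  also have "\<dots> = r h" using R by (auto simp: rsupp_def)
  finally show "r h = (\<Sum>p\<in>R. r p * delta p h)" by simp
qed

lemma rmul_expand_prod:
  assumes "finite R" "finite S" "rsupp r \<subseteq> R" "rsupp s \<subseteq> S"
  shows "rmul r s = (\<lambda>h. \<Sum>pq\<in>R \<times> S. (r (fst pq) * s (snd pq)) * delta (pmul (fst pq) (snd pq)) h)"
  using assms by (auto simp: rmul_eq sum.cartesian_product case_prod_beta)

lemma sum_prod_split: "(\<Sum>pq\<in>A \<times> B. g pq) = (\<Sum>p\<in>A. \<Sum>q\<in>B. g (p, q))"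
  by (simp add: sum.cartesian_product)

lemma pmul_assoc: "pmul (pmul p q) r = pmul p (pmul q r)"
  by (simp add: pmul_def fmul_assoc)

lemma rmul_assoc:
  assumes r: "finite (rsupp r)" and s: "finite (rsupp s)" and t: "finite (rsupp t)"
  shows "rmul (rmul r s) t = rmul r (rmul s t)"
proof (rule ext)
  fix h0
  let ?R = "rsupp r" and ?S = "rsupp s" and ?T = "rsupp t"
  have "rmul (rmul r s) t h0 = (\<Sum>pq\<in>?R \<times> ?S. (r (fst pq) * s (snd pq)) * rmul (delta (pmul (fst pq) (snd pq))) t h0)"
    by (subst rmul_expand_prod[of ?R ?S], simp_all add: r s)
       (rule rmul_lin_left, simp_all add: r s t rsupp_delta)
  also have "\<dots> = (\<Sum>pq\<in>?R \<times> ?S. \<Sum>x\<in>?T. (r (fst pq) * s (snd pq)) * (t x * delta (pmul (pmul (fst pq) (snd pq)) x) h0))"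
    by (intro sum.cong refl) (simp add: rmul_eq[of "{_}" ?T] t rsupp_delta sum_distrib_left)
  also have "\<dots> = (\<Sum>p\<in>?R. \<Sum>q\<in>?S. \<Sum>x\<in>?T. r p * s q * t x * delta (pmul p (pmul q x)) h0)"
    by (simp add: sum_prod_split pmul_assoc mult_ac)
  finally have L: "rmul (rmul r s) t h0 = (\<Sum>p\<in>?R. \<Sum>q\<in>?S. \<Sum>x\<in>?T. r p * s q * t x * delta (pmul p (pmul q x)) h0)" .
  have "rmul r (rmul s t) h0 = (\<Sum>qx\<in>?S \<times> ?T. (s (fst qx) * t (snd qx)) * rmul r (delta (pmul (fst qx) (snd qx))) h0)"
    by (subst rmul_expand_prod[of ?S ?T], simp_all add: s t)
       (rule rmul_lin_right, simp_all add: r s t rsupp_delta)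
  also have "\<dots> = (\<Sum>qx\<in>?S \<times> ?T. \<Sum>p\<in>?R. (s (fst qx) * t (snd qx)) * (r p * delta (pmul p (pmul (fst qx) (snd qx))) h0))"
    by (intro sum.cong refl) (simp add: rmul_eq[of ?R "{_}"] r rsupp_delta sum_distrib_left)
  also have "\<dots> = (\<Sum>q\<in>?S. \<Sum>x\<in>?T. \<Sum>p\<in>?R. r p * s q * t x * delta (pmul p (pmul q x)) h0)"
    by (simp add: sum_prod_split mult_ac)
  also have "\<dots> = (\<Sum>p\<in>?R. \<Sum>q\<in>?S. \<Sum>x\<in>?T. r p * s q * t x * delta (pmul p (pmul q x)) h0)"
    by (rule swap3)
  finally show "rmul (rmul r s) t h0 = rmul r (rmul s t) h0" using L by simp
qed




definition phi :: "(word \<times> word \<Rightarrow> word \<times> word) \<Rightarrow> ring_el \<Rightarrow> ring_el" where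
  "phi \<psi> r h' = (\<Sum>h\<in>{h. r h \<noteq> 0 \<and> \<psi> h = h'}. r h)"

lemma phi_eq:
  assumes "finite R" "rsupp r \<subseteq> R"
  shows "phi \<psi> r h' = (\<Sum>h\<in>R. r h * delta (\<psi> h) h')"
proof -
  have sub: "{h. r h \<noteq> 0 \<and> \<psi> h = h'} \<subseteq> R" using assms(2) by (auto simp: rsupp_def)
  have "(\<Sum>h\<in>R. r h * delta (\<psi> h) h') = (\<Sum>h\<in>{h. r h \<noteq> 0 \<and> \<psi> h = h'}. r h)"
    by (rule sum.mono_neutral_cong_right) (use assms sub in \<open>auto simp: delta_def\<close>)
  then show ?thesis by (simp add: phi_def)
qed

lemma rsupp_sum: "rsupp (\<lambda>h. \<Sum>i\<in>I. f i h) \<subseteq> (\<Union>i\<in>I. rsupp (f i))"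
  using rsupp_lin[of "\<lambda>_. 1" f I] by simp

lemma finite_rsupp_sum: "finite I \<Longrightarrow> (\<forall>i\<in>I. finite (rsupp (f i))) \<Longrightarrow>
  finite (rsupp (\<lambda>h. \<Sum>i\<in>I. f i h))"
  by (rule finite_subset[OF rsupp_sum]) auto

lemma phi_lin:
  assumes I: "finite I" and f: "\<forall>i\<in>I. finite (rsupp (f i))"
  shows "phi \<psi> (\<lambda>h. \<Sum>i\<in>I. c i * f i h) = (\<lambda>h'. \<Sum>i\<in>I. c i * phi \<psi> (f i) h')"
proof (rule ext)
  fix h'
  define A where "A = (\<Union>i\<in>I. rsupp (f i))"
  have A: "finite A" using I f by (simp add: A_def)
  have "phi \<psi> (\<lambda>h. \<Sum>i\<in>I. c i * f i h) h' = (\<Sum>h\<in>A. (\<Sum>i\<in>I. c i * f i h) * delta (\<psi> h) h')"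
    using A rsupp_lin[of c f I] by (intro phi_eq) (auto simp: A_def)
  also have "\<dots> = (\<Sum>h\<in>A. \<Sum>i\<in>I. c i * (f i h * delta (\<psi> h) h'))"
    by (simp add: sum_distrib_right mult.assoc)
  also have "\<dots> = (\<Sum>i\<in>I. \<Sum>h\<in>A. c i * (f i h * delta (\<psi> h) h'))"
    by (rule sum.swap)
  also have "\<dots> = (\<Sum>i\<in>I. c i * phi \<psi> (f i) h')"
  proof (rule sum.cong[OF refl])
    fix i assume "i \<in> I"
    then have "rsupp (f i) \<subseteq> A" by (auto simp: A_def)
    then show "(\<Sum>h\<in>A. c i * (f i h * delta (\<psi> h) h')) = c i * phi \<psi> (f i) h'"
      using A by (simp add: phi_eq[of A] sum_distrib_left)
  qed
  finally show "phi \<psi> (\<lambda>h. \<Sum>i\<in>I. c i * f i h) h' = (\<Sum>i\<in>I. c i * phi \<psi> (f i) h')" .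
qed

lemma phi_sum:
  assumes "finite I" "\<forall>i\<in>I. finite (rsupp (f i))"
  shows "phi \<psi> (\<lambda>h. \<Sum>i\<in>I. f i h) = (\<lambda>h'. \<Sum>i\<in>I. phi \<psi> (f i) h')"
  using phi_lin[OF assms, of \<psi> "\<lambda>_. 1"] by simp

lemma phi_delta: "phi \<psi> (delta p) = delta (\<psi> p)"
  by (rule ext, subst phi_eq[of "{p}"]) (simp_all add: rsupp_delta)

lemma phi_zero: "phi \<psi> (\<lambda>_. 0) = (\<lambda>_. 0)"
  by (rule ext) (simp add: phi_def)

lemma rsupp_diff: "rsupp (\<lambda>h. r h - s h) \<subseteq> rsupp r \<union> rsupp s"
  by (auto simp: rsupp_def)

lemma phi_diff:
  assumes "finite (rsupp r)" "finite (rsupp s)"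
  shows "phi \<psi> (\<lambda>h. r h - s h) = (\<lambda>h. phi \<psi> r h - phi \<psi> s h)"
proof (rule ext)
  fix h'
  let ?R = "rsupp r \<union> rsupp s"
  have "phi \<psi> (\<lambda>h. r h - s h) h' = (\<Sum>h\<in>?R. (r h - s h) * delta (\<psi> h) h')"
    using assms rsupp_diff[of r s] by (intro phi_eq) auto
  also have "\<dots> = (\<Sum>h\<in>?R. r h * delta (\<psi> h) h') - (\<Sum>h\<in>?R. s h * delta (\<psi> h) h')"
    by (simp add: left_diff_distrib sum_subtractf)
  also have "\<dots> = phi \<psi> r h' - phi \<psi> s h'"
    using assms by (simp add: phi_eq[of ?R])
  finally show "phi \<psi> (\<lambda>h. r h - s h) h' = phi \<psi> r h' - phi \<psi> s h'" .
qed

lemma rsupp_phi: "rsupp (phi \<psi> r) \<subseteq> \<psi> ` rsupp r"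
proof
  fix h' assume "h' \<in> rsupp (phi \<psi> r)"
  then have "phi \<psi> r h' \<noteq> 0" by (simp add: rsupp_def)
  moreover have "phi \<psi> r h' = (\<Sum>h\<in>{h. r h \<noteq> 0 \<and> \<psi> h = h'}. r h)" by (rule phi_def)
  ultimately have "{h. r h \<noteq> 0 \<and> \<psi> h = h'} \<noteq> {}" by (intro notI) simp
  then show "h' \<in> \<psi> ` rsupp r" by (auto simp: rsupp_def)
qed

lemma finite_rsupp_phi: "finite (rsupp r) \<Longrightarrow> finite (rsupp (phi \<psi> r))"
  by (rule finite_subset[OF rsupp_phi]) auto

lemma phi_rmul:
  assumes hom: "\<And>p q. \<psi> (pmul p q) = pmul (\<psi> p) (\<psi> q)"
    and r: "finite (rsupp r)" and s: "finite (rsupp s)"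
  shows "phi \<psi> (rmul r s) = rmul (phi \<psi> r) (phi \<psi> s)"
proof (rule ext)
  fix h0
  let ?R = "rsupp r" and ?S = "rsupp s"
  have "phi \<psi> (rmul r s) h0 = (\<Sum>pq\<in>?R \<times> ?S. (r (fst pq) * s (snd pq)) * delta (\<psi> (pmul (fst pq) (snd pq))) h0)"
    by (subst rmul_expand_prod[of ?R ?S], simp_all add: r s)
       (subst phi_lin, simp_all add: r s rsupp_delta phi_delta)
  also have "\<dots> = (\<Sum>p\<in>?R. \<Sum>q\<in>?S. r p * s q * delta (pmul (\<psi> p) (\<psi> q)) h0)"
    by (simp add: sum_prod_split hom)
  finally have L: "phi \<psi> (rmul r s) h0 = (\<Sum>p\<in>?R. \<Sum>q\<in>?S. r p * s q * delta (pmul (\<psi> p) (\<psi> q)) h0)" .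
  have pr: "phi \<psi> r = (\<lambda>h. \<Sum>p\<in>?R. r p * delta (\<psi> p) h)"
    using r by (intro ext phi_eq) auto
  have ps: "phi \<psi> s = (\<lambda>h. \<Sum>q\<in>?S. s q * delta (\<psi> q) h)"
    using s by (intro ext phi_eq) auto
  have fs: "finite (rsupp (\<lambda>h. \<Sum>q\<in>?S. s q * delta (\<psi> q) h))"
    using s by (intro finite_rsupp_lin) (auto simp: rsupp_delta)
  have "rmul (phi \<psi> r) (phi \<psi> s) h0 = (\<Sum>p\<in>?R. r p * rmul (delta (\<psi> p)) (\<lambda>h. \<Sum>q\<in>?S. s q * delta (\<psi> q) h) h0)"
    unfolding pr ps using r fs by (intro rmul_lin_left) (auto simp: rsupp_delta)
  also have "\<dots> = (\<Sum>p\<in>?R. r p * (\<Sum>q\<in>?S. s q * rmul (delta (\<psi> p)) (delta (\<psi> q)) h0))"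
    using s by (intro sum.cong refl arg_cong2[where f="(*)"] rmul_lin_right) (auto simp: rsupp_delta)
  also have "\<dots> = (\<Sum>p\<in>?R. \<Sum>q\<in>?S. r p * s q * delta (pmul (\<psi> p) (\<psi> q)) h0)"
    by (simp add: rmul_delta sum_distrib_left mult.assoc)
  finally show "phi \<psi> (rmul r s) h0 = rmul (phi \<psi> r) (phi \<psi> s) h0" using L by simp
qed

lemma rmul_zero_left[simp]: "rmul (\<lambda>_. 0) s = (\<lambda>_. 0)" by (rule ext) (simp add: rmul_def)
lemma rmul_zero_right[simp]: "rmul r (\<lambda>_. 0) = (\<lambda>_. 0)" by (rule ext) (simp add: rmul_def)

lemma rmul_diff_left:
  assumes "finite (rsupp r)" "finite (rsupp r')" "finite (rsupp s)"
  shows "rmul (\<lambda>h. r h - r' h) s = (\<lambda>h. rmul r s h - rmul r' s h)"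
proof (rule ext)
  fix h0
  have "rmul (\<lambda>h. r h - r' h) s h0 = rmul (\<lambda>h. \<Sum>i\<in>{True, False}. (if i then 1 else -1) * (if i then r else r') h) s h0"
    by simp
  also have "\<dots> = (\<Sum>i\<in>{True, False}. (if i then 1 else -1) * rmul (if i then r else r') s h0)"
    using assms by (intro rmul_lin_left) auto
  finally show "rmul (\<lambda>h. r h - r' h) s h0 = rmul r s h0 - rmul r' s h0" by simp
qed

lemma rmul_diff_right:
  assumes "finite (rsupp r)" "finite (rsupp s)" "finite (rsupp s')"
  shows "rmul r (\<lambda>h. s h - s' h) = (\<lambda>h. rmul r s h - rmul r s' h)"
proof (rule ext)
  fix h0
  have "rmul r (\<lambda>h. s h - s' h) h0 = rmul r (\<lambda>h. \<Sum>i\<in>{True, False}. (if i then 1 else -1) * (if i then s else s') h) h0"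
    by simp
  also have "\<dots> = (\<Sum>i\<in>{True, False}. (if i then 1 else -1) * rmul r (if i then s else s') h0)"
    using assms by (intro rmul_lin_right) auto
  finally show "rmul r (\<lambda>h. s h - s' h) h0 = rmul r s h0 - rmul r s' h0" by simp
qed

lemma rmul_sum_left:
  assumes "finite I" "\<forall>i\<in>I. finite (rsupp (f i))" "finite (rsupp s)"
  shows "rmul (\<lambda>h. \<Sum>i\<in>I. f i h) s h0 = (\<Sum>i\<in>I. rmul (f i) s h0)"
  using rmul_lin_left[OF assms, of "\<lambda>_. 1"] by simp

lemma rmul_sum_right:
  assumes "finite I" "\<forall>i\<in>I. finite (rsupp (f i))" "finite (rsupp r)"
  shows "rmul r (\<lambda>h. \<Sum>i\<in>I. f i h) h0 = (\<Sum>i\<in>I. rmul r (f i) h0)"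
  using rmul_lin_right[OF assms, of "\<lambda>_. 1"] by simp




definition fin :: "matrix \<Rightarrow> bool" where "fin M \<longleftrightarrow> (\<forall>i j k. finite (rsupp (M i j k)))"

lemma mat_mult_fun: "mat_mult M N i j k = (\<lambda>h. \<Sum>l<2. \<Sum>a\<le>k. rmul (M i l a) (N l j (k - a)) h)"
  by (rule ext) (simp add: mat_mult_def)

lemma fin_mat_mult: "fin M \<Longrightarrow> fin N \<Longrightarrow> fin (mat_mult M N)"
  unfolding fin_def mat_mult_fun
  by (intro allI finite_rsupp_sum ballI finite_rsupp_rmul) auto

lemma tri: "(\<Sum>b\<le>(k::nat). \<Sum>a\<le>b. G a (b - a)) = (\<Sum>a\<le>k. \<Sum>c\<le>k - a. (G a c :: 'x :: comm_monoid_add))"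
proof (induction k)
  case 0 then show ?case by simp
next
  case (Suc k)
  have "(\<Sum>a\<le>Suc k. \<Sum>c\<le>Suc k - a. G a c) = (\<Sum>a\<le>k. \<Sum>c\<le>Suc k - a. G a c) + G (Suc k) 0"
    by simp
  also have "(\<Sum>a\<le>k. \<Sum>c\<le>Suc k - a. G a c) = (\<Sum>a\<le>k. (\<Sum>c\<le>k - a. G a c) + G a (Suc k - a))"
    by (intro sum.cong refl) (simp add: Suc_diff_le)
  also have "\<dots> = (\<Sum>a\<le>k. \<Sum>c\<le>k - a. G a c) + (\<Sum>a\<le>k. G a (Suc k - a))"
    by (simp add: sum.distrib)
  finally show ?case using Suc by (simp add: add.assoc)
qed

lemma mat_mult_assoc:
  assumes M: "fin M" and N: "fin N" and P: "fin P"
  shows "mat_mult (mat_mult M N) P = mat_mult M (mat_mult N P)"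
proof (intro ext)
  fix i j k h0
  define F where "F l a l' c = rmul (M i l a) (rmul (N l l' c) (P l' j (k - a - c))) h0" for l a l' c
  have fM: "finite (rsupp (M i j k))" and fN: "finite (rsupp (N i j k))" and fP: "finite (rsupp (P i j k))"
    for i j k using M N P by (auto simp: fin_def)
  have "mat_mult (mat_mult M N) P i j k h0
      = (\<Sum>l'<2. \<Sum>b\<le>k. rmul (\<lambda>h. \<Sum>l<2. \<Sum>a\<le>b. rmul (M i l a) (N l l' (b - a)) h) (P l' j (k - b)) h0)"
    by (simp add: mat_mult_def[of "mat_mult M N"] mat_mult_fun)
  also have "\<dots> = (\<Sum>l'<2. \<Sum>b\<le>k. \<Sum>l<2. \<Sum>a\<le>b. rmul (rmul (M i l a) (N l l' (b - a))) (P l' j (k - b)) h0)"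
    by (intro sum.cong refl, subst rmul_sum_left)
       (auto simp: fP fM fN finite_rsupp_rmul finite_rsupp_sum rmul_sum_left)
  also have "\<dots> = (\<Sum>l'<2. \<Sum>b\<le>k. \<Sum>l<2. \<Sum>a\<le>b. F l a l' (b - a))"
    by (intro sum.cong refl) (simp add: F_def rmul_assoc fM fN fP)
  also have "\<dots> = (\<Sum>l'<2. \<Sum>l<2. \<Sum>b\<le>k. \<Sum>a\<le>b. F l a l' (b - a))"
    by (rule sum.cong[OF refl], rule sum.swap)
  also have "\<dots> = (\<Sum>l'<2. \<Sum>l<2. \<Sum>a\<le>k. \<Sum>c\<le>k - a. F l a l' c)"
  proof (rule sum.cong[OF refl], rule sum.cong[OF refl])
    fix l' l
    show "(\<Sum>b\<le>k. \<Sum>a\<le>b. F l a l' (b - a)) = (\<Sum>a\<le>k. \<Sum>c\<le>k - a. F l a l' c)"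
      by (rule tri[where G="\<lambda>a c. F l a l' c"])
  qed
  also have "\<dots> = (\<Sum>l<2. \<Sum>l'<2. \<Sum>a\<le>k. \<Sum>c\<le>k - a. F l a l' c)"
    by (rule sum.swap)
  also have "\<dots> = (\<Sum>l<2. \<Sum>a\<le>k. \<Sum>l'<2. \<Sum>c\<le>k - a. F l a l' c)"
    by (rule sum.cong[OF refl], rule sum.swap)
  also have "\<dots> = (\<Sum>l<2. \<Sum>a\<le>k. rmul (M i l a) (\<lambda>h. \<Sum>l'<2. \<Sum>c\<le>k - a. rmul (N l l' c) (P l' j (k - a - c)) h) h0)"
    by (intro sum.cong refl, subst rmul_sum_right)
       (auto simp: F_def fP fM fN finite_rsupp_rmul finite_rsupp_sum rmul_sum_right)
  also have "\<dots> = mat_mult M (mat_mult N P) i j k h0"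
    by (simp add: mat_mult_def[of M "mat_mult N P"] mat_mult_fun)
  finally show "mat_mult (mat_mult M N) P i j k h0 = mat_mult M (mat_mult N P) i j k h0" .
qed




definition RP :: "(word \<times> word) set" where "RP = {p. reduced (fst p) \<and> reduced (snd p)}"

definition eq2 :: "matrix \<Rightarrow> matrix \<Rightarrow> bool" where
  "eq2 M N \<longleftrightarrow> (\<forall>i<2. \<forall>j<2. M i j = N i j)"

lemma eq2_refl[simp]: "eq2 M M" by (simp add: eq2_def)
lemma eq2_sym: "eq2 M N \<Longrightarrow> eq2 N M" by (simp add: eq2_def)
lemma eq2_trans: "eq2 M N \<Longrightarrow> eq2 N P \<Longrightarrow> eq2 M P" by (simp add: eq2_def)

lemma eq2_mult: "eq2 M M' \<Longrightarrow> eq2 N N' \<Longrightarrow> eq2 (mat_mult M N) (mat_mult M' N')"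
  unfolding eq2_def by (auto simp: mat_mult_fun intro!: ext)

lemma rmul_one_left:
  assumes "finite (rsupp r)" "rsupp r \<subseteq> RP"
  shows "rmul (delta ([], [])) r = r"
proof (rule ext)
  fix h
  have "rmul (delta ([], [])) r h = (\<Sum>p\<in>{([], [])}. \<Sum>q\<in>rsupp r. delta ([], []) p * r q * delta (pmul p q) h)"
    using assms by (intro rmul_eq) (auto simp: rsupp_delta)
  also have "\<dots> = (\<Sum>q\<in>rsupp r. r q * delta q h)"
  proof -
    have "pmul ([], []) q = q" if "q \<in> rsupp r" for q
      using that assms(2) by (auto simp: RP_def pmul_def fmul_Nil_left)
    then show ?thesis by simp
  qed
  also have "\<dots> = r h" using expand[OF assms(1) order_refl] by metis
  finally show "rmul (delta ([], [])) r h = r h" .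
qed

lemma mat_one_left:
  assumes "fin M" "\<forall>i j k. rsupp (M i j k) \<subseteq> RP"
  shows "eq2 (mat_mult mat_one M) M"
  unfolding eq2_def
proof (intro allI impI ext)
  fix i j k h assume i: "i < (2::nat)" and j: "j < (2::nat)"
  have t: "rmul (mat_one i l a) (M l j (k - a)) h = (if l = i then (if a = 0 then M i j k h else 0) else 0)"
    for l a
    using assms by (auto simp: mat_one_def rmul_one_left fin_def)
  show "mat_mult mat_one M i j k h = M i j k h"
  proof -
    have "(\<Sum>a\<le>k. (if l = i then (if a = 0 then M i j k h else 0) else 0)) = (if l = i then M i j k h else 0)" for l
      by (cases "l = i") (simp_all add: sum.delta)
    then show ?thesis using i by (simp add: mat_mult_def t sum.delta)
  qed
qed

lemma sum_atMost_2: "(\<forall>a\<ge>2. g a = 0) \<Longrightarrow> (\<Sum>a\<le>(k::nat). g a) = g 0 + (if 1 \<le> k then g 1 else (0::'x::comm_monoid_add))"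
proof (induction k)
  case (Suc k)
  then show ?case by (cases k) auto
qed simp

lemma rmul_ddl: "rmul (\<lambda>h. delta p h - delta q h) (delta r) = (\<lambda>h. delta (pmul p r) h - delta (pmul q r) h)"
  by (simp add: rmul_diff_left rsupp_delta rmul_delta)
lemma rmul_ddr: "rmul (delta r) (\<lambda>h. delta p h - delta q h) = (\<lambda>h. delta (pmul r p) h - delta (pmul r q) h)"
  by (simp add: rmul_diff_right rsupp_delta rmul_delta)

lemma fmul_Nil_Nil[simp]: "fmul [] [] = []" by (simp add: fmul_def)

lemma rhoF_zero: "2 \<le> k \<Longrightarrow> rhoF f i j k = (\<lambda>_. 0)" by (simp add: rhoF_def)
lemma rhoG_zero: "2 \<le> k \<Longrightarrow> rhoG f i j k = (\<lambda>_. 0)" by (simp add: rhoG_def)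

lemma cases3: "(k::nat) = 0 \<or> k = 1 \<or> 2 \<le> k" by arith
lemma cases4: "(k::nat) = 0 \<or> k = 1 \<or> k = 2 \<or> 3 \<le> k" by arith

lemma rhoF_mult:
  assumes f: "reduced f" and g: "reduced g"
  shows "mat_mult (rhoF f) (rhoF g) = rhoF (fmul f g)"
proof (intro ext)
  fix i j k h
  have pF1: "pmul (f, []) (g, []) = (fmul f g, [])" and pF2: "pmul (f, []) ([], []) = (f, [])"
    and pF3: "pmul ([], []) (g, []) = (g, [])" and pF4: "pmul ([], []) ([], []) = ([], [])"
    by (simp_all add: pmul_def f g fmul_Nil_left fmul_Nil_right)
  have e: "(\<Sum>a\<le>k. rmul (rhoF f i l a) (rhoF g l j (k - a)) h)
     = rmul (rhoF f i l 0) (rhoF g l j k) h + (if 1 \<le> k then rmul (rhoF f i l 1) (rhoF g l j (k - 1)) h else 0)" for l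
    by (subst sum_atMost_2[where g="\<lambda>a. rmul (rhoF f i l a) (rhoF g l j (k - a)) h"]) (simp_all add: rhoF_zero)
  have "mat_mult (rhoF f) (rhoF g) i j k h = (\<Sum>l<2. rmul (rhoF f i l 0) (rhoF g l j k) h + (if 1 \<le> k then rmul (rhoF f i l 1) (rhoF g l j (k - 1)) h else 0))"
    by (simp add: mat_mult_def e)
  also have "\<dots> = rhoF (fmul f g) i j k h"
    using cases3[of i] cases3[of j] cases4[of k]
    by (elim disjE) (simp_all add: numeral_2_eq_2 lessThan_Suc rhoF_def rmul_delta rmul_ddl rmul_ddr pF1 pF2 pF3 pF4)
  finally show "mat_mult (rhoF f) (rhoF g) i j k h = rhoF (fmul f g) i j k h" .
qed

lemma rhoG_mult:
  assumes f: "reduced f" and g: "reduced g"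
  shows "mat_mult (rhoG f) (rhoG g) = rhoG (fmul f g)"
proof (intro ext)
  fix i j k h
  have pG1: "pmul ([], f) ([], g) = ([], fmul f g)" and pG2: "pmul ([], f) ([], []) = ([], f)"
    and pG3: "pmul ([], []) ([], g) = ([], g)" and pG4: "pmul ([], []) ([], []) = ([], [])"
    by (simp_all add: pmul_def f g fmul_Nil_left fmul_Nil_right)
  have e: "(\<Sum>a\<le>k. rmul (rhoG f i l a) (rhoG g l j (k - a)) h)
     = rmul (rhoG f i l 0) (rhoG g l j k) h + (if 1 \<le> k then rmul (rhoG f i l 1) (rhoG g l j (k - 1)) h else 0)" for l
    by (subst sum_atMost_2[where g="\<lambda>a. rmul (rhoG f i l a) (rhoG g l j (k - a)) h"]) (simp_all add: rhoG_zero)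
  have "mat_mult (rhoG f) (rhoG g) i j k h = (\<Sum>l<2. rmul (rhoG f i l 0) (rhoG g l j k) h + (if 1 \<le> k then rmul (rhoG f i l 1) (rhoG g l j (k - 1)) h else 0))"
    by (simp add: mat_mult_def e)
  also have "\<dots> = rhoG (fmul f g) i j k h"
    using cases3[of i] cases3[of j] cases4[of k]
    by (elim disjE) (simp_all add: numeral_2_eq_2 lessThan_Suc rhoG_def rmul_delta rmul_ddl rmul_ddr pG1 pG2 pG3 pG4)
  finally show "mat_mult (rhoG f) (rhoG g) i j k h = rhoG (fmul f g) i j k h" .
qed


lemma fmul_single_linv: "fmul [a] [linv a] = []"
  by (simp add: fmul_def reduce_Cons red_cons_Cons)

lemma rhoF_Nil: "eq2 (rhoF []) mat_one"
  unfolding eq2_def by (auto simp: rhoF_def mat_one_def delta_def intro!: ext)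
lemma rhoG_Nil: "eq2 (rhoG []) mat_one"
  unfolding eq2_def by (auto simp: rhoG_def mat_one_def delta_def intro!: ext)

definition suppin :: "(word \<times> word) set \<Rightarrow> matrix \<Rightarrow> bool" where
  "suppin X M \<longleftrightarrow> (\<forall>i j k. rsupp (M i j k) \<subseteq> X)"

lemma rsupp_zero[simp]: "rsupp (\<lambda>_. 0) = {}" by (simp add: rsupp_def)

lemma fin_rhoF: "fin (rhoF f)"
  by (auto simp: fin_def rhoF_def rsupp_delta intro: finite_subset[OF rsupp_diff])
lemma fin_rhoG: "fin (rhoG f)"
  by (auto simp: fin_def rhoG_def rsupp_delta intro: finite_subset[OF rsupp_diff])
lemma fin_mat_one: "fin mat_one"
  by (auto simp: fin_def mat_one_def rsupp_delta)


lemma suppin_rhoF: "(f, []) \<in> X \<Longrightarrow> ([], []) \<in> X \<Longrightarrow> suppin X (rhoF f)"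
  unfolding suppin_def rhoF_def using rsupp_diff[of "delta (f, [])" "delta ([], [])"]
  by (auto simp: rsupp_delta)
lemma suppin_rhoG: "([], g) \<in> X \<Longrightarrow> ([], []) \<in> X \<Longrightarrow> suppin X (rhoG g)"
  unfolding suppin_def rhoG_def using rsupp_diff[of "delta ([], g)" "delta ([], [])"]
  by (auto simp: rsupp_delta)
lemma suppin_mat_one: "([], []) \<in> X \<Longrightarrow> suppin X mat_one"
  by (auto simp: suppin_def mat_one_def rsupp_delta)

lemma suppin_mult:
  assumes cl: "\<And>p q. p \<in> X \<Longrightarrow> q \<in> X \<Longrightarrow> pmul p q \<in> X"
    and "suppin X M" "suppin X N"
  shows "suppin X (mat_mult M N)"
  unfolding suppin_def mat_mult_fun
proof (intro allI subsetI)
  fix i j k h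
  assume "h \<in> rsupp (\<lambda>h. \<Sum>l<2. \<Sum>a\<le>k. rmul (M i l a) (N l j (k - a)) h)"
  then obtain l where "h \<in> rsupp (\<lambda>h. \<Sum>a\<le>k. rmul (M i l a) (N l j (k - a)) h)"
    using rsupp_sum[of "\<lambda>l h. \<Sum>a\<le>k. rmul (M i l a) (N l j (k - a)) h" "{..<2}"] by blast
  then obtain a where "h \<in> rsupp (rmul (M i l a) (N l j (k - a)))"
    using rsupp_sum[of "\<lambda>a h. rmul (M i l a) (N l j (k - a)) h" "{..k}"] by blast
  then obtain p q where "p \<in> rsupp (M i l a)" "q \<in> rsupp (N l j (k - a))" "h = pmul p q"
    using rsupp_rmul[of "M i l a" "N l j (k - a)"] by auto
  then show "h \<in> X" using assms unfolding suppin_def by blast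
qed

lemma RP_closed: "p \<in> RP \<Longrightarrow> q \<in> RP \<Longrightarrow> pmul p q \<in> RP"
  by (simp add: RP_def pmul_def fmul_def reduced_reduce)

lemma reduced_single[simp]: "reduced [a]" by simp

definition DD :: "nat \<Rightarrow> nat \<Rightarrow> (word \<times> word) set" where
  "DD m n = {p. fst p \<in> free_group m \<and> snd p \<in> free_group n}"

lemma DD_closed: "p \<in> DD m n \<Longrightarrow> q \<in> DD m n \<Longrightarrow> pmul p q \<in> DD m n"
  by (simp add: DD_def pmul_def free_group_fmul)

lemma DD_RP: "DD m n \<subseteq> RP" by (auto simp: DD_def RP_def free_group_def)

lemma Nil_free[simp]: "[] \<in> free_group n" by (simp add: free_group_def)

lemma fin_rho_letter: "fin (rho_letter m a)"
  by (simp add: rho_letter_def fin_rhoF fin_rhoG)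

lemma fin_rho: "fin (rho m w)"
  by (induction w) (simp_all add: rho_def fin_mat_one fin_mat_mult fin_rho_letter)

lemma suppin_rho_letter_RP: "suppin RP (rho_letter m a)"
  by (simp add: rho_letter_def suppin_rhoF suppin_rhoG RP_def)

lemma rho_Cons: "rho m (a # w) = mat_mult (rho_letter m a) (rho m w)"
  by (simp add: rho_def)
lemma rho_Nil: "rho m [] = mat_one" by (simp add: rho_def)

lemma suppin_rho_RP: "suppin RP (rho m w)"
proof (induction w)
  case Nil then show ?case by (simp add: rho_Nil suppin_mat_one RP_def)
next
  case (Cons a w) then show ?case by (simp add: rho_Cons suppin_mult RP_closed suppin_rho_letter_RP)
qed

lemma suppin_rho_letter_DD: "fst a < m + n \<Longrightarrow> suppin (DD m n) (rho_letter m a)"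
  by (auto simp: rho_letter_def DD_def free_group_def intro!: suppin_rhoF suppin_rhoG)

lemma suppin_rho_DD: "(\<forall>a\<in>set w. fst a < m + n) \<Longrightarrow> suppin (DD m n) (rho m w)"
proof (induction w)
  case Nil then show ?case by (simp add: rho_def suppin_mat_one DD_def)
next
  case (Cons a w)
  then show ?case
    by (simp add: rho_def) (metis rho_def suppin_mult DD_closed suppin_rho_letter_DD)
qed

lemma rho_append: "eq2 (rho m (u @ v)) (mat_mult (rho m u) (rho m v))"
proof (induction u)
  case Nil
  show ?case using mat_one_left[OF fin_rho, of m v] suppin_rho_RP[of m v]
    by (simp add: rho_Nil suppin_def eq2_sym)
next
  case (Cons a u)
  have "eq2 (rho m ((a # u) @ v)) (mat_mult (rho_letter m a) (mat_mult (rho m u) (rho m v)))"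
    using Cons by (simp add: rho_Cons eq2_mult)
  then show ?case
    by (simp add: rho_Cons mat_mult_assoc fin_rho fin_rho_letter)
qed

lemma rho_letter_inv: "eq2 (mat_mult (rho_letter m a) (rho_letter m (linv a))) mat_one"
  by (cases "fst a < m") (simp_all add: rho_letter_def rhoF_mult rhoG_mult fmul_single_linv[of a]
      rhoF_Nil rhoG_Nil, simp_all add: linv_def fmul_def reduce_Cons red_cons_Cons rhoG_Nil)

lemma rho_red_cons: "eq2 (rho m (red_cons a x)) (mat_mult (rho_letter m a) (rho m x))"
proof (cases x)
  case Nil then show ?thesis by (simp add: rho_Cons)
next
  case (Cons b x')
  show ?thesis
  proof (cases "b = linv a")
    case True
    have "mat_mult (rho_letter m a) (rho m x) = mat_mult (mat_mult (rho_letter m a) (rho_letter m (linv a))) (rho m x')"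
      using Cons True by (simp add: rho_Cons mat_mult_assoc fin_rho fin_rho_letter)
    moreover have "eq2 \<dots> (mat_mult mat_one (rho m x'))"
      by (simp add: eq2_mult rho_letter_inv)
    moreover have "eq2 (mat_mult mat_one (rho m x')) (rho m x')"
      using mat_one_left[OF fin_rho, of m x'] suppin_rho_RP[of m x'] by (simp add: suppin_def)
    ultimately show ?thesis using Cons True
      by (simp add: red_cons_Cons) (meson eq2_sym eq2_trans)
  next
    case False then show ?thesis using Cons by (simp add: red_cons_Cons rho_Cons)
  qed
qed

lemma rho_reduce: "eq2 (rho m (reduce w)) (rho m w)"
proof (induction w)
  case (Cons a w)
  have "eq2 (rho m (reduce (a # w))) (mat_mult (rho_letter m a) (rho m (reduce w)))"
    by (simp add: reduce_Cons rho_red_cons)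
  moreover have "eq2 (mat_mult (rho_letter m a) (rho m (reduce w))) (rho m (a # w))"
    using Cons by (simp add: rho_Cons eq2_mult)
  ultimately show ?case by (rule eq2_trans)
qed simp

lemma rho_fmul: "eq2 (rho m (fmul u v)) (mat_mult (rho m u) (rho m v))"
  unfolding fmul_def using rho_reduce rho_append eq2_trans by blast

lemma rho_F: "(\<forall>a\<in>set f. fst a < m) \<Longrightarrow> eq2 (rho m f) (rhoF (reduce f))"
proof (induction f)
  case Nil then show ?case by (simp add: rho_Nil eq2_sym rhoF_Nil)
next
  case (Cons a f)
  have "eq2 (rho m (a # f)) (mat_mult (rhoF [a]) (rhoF (reduce f)))"
    using Cons by (simp add: rho_Cons rho_letter_def eq2_mult)
  moreover have "mat_mult (rhoF [a]) (rhoF (reduce f)) = rhoF (reduce (a # f))"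
    by (simp add: rhoF_mult reduced_reduce fmul_def reduce_right reduce_Cons)
  ultimately show ?case by simp
qed

lemma rho_G: "eq2 (rho m (map (sh m) g)) (rhoG (reduce g))"
proof (induction g)
  case Nil then show ?case by (simp add: rho_Nil eq2_sym rhoG_Nil)
next
  case (Cons a g)
  have "rho_letter m (sh m a) = rhoG [a]" by (simp add: rho_letter_def)
  then have "eq2 (rho m (map (sh m) (a # g))) (mat_mult (rhoG [a]) (rhoG (reduce g)))"
    using Cons by (simp add: rho_Cons eq2_mult)
  moreover have "mat_mult (rhoG [a]) (rhoG (reduce g)) = rhoG (reduce (a # g))"
    by (simp add: rhoG_mult reduced_reduce fmul_def reduce_right reduce_Cons)
  ultimately show ?case by simp
qed




definition mphi :: "(word \<times> word \<Rightarrow> word \<times> word) \<Rightarrow> matrix \<Rightarrow> matrix" where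
  "mphi \<psi> M i j k = phi \<psi> (M i j k)"

lemma mphi_mult:
  assumes hom: "\<And>p q. \<psi> (pmul p q) = pmul (\<psi> p) (\<psi> q)" and M: "fin M" and N: "fin N"
  shows "mphi \<psi> (mat_mult M N) = mat_mult (mphi \<psi> M) (mphi \<psi> N)"
proof (intro ext)
  fix i j k h
  have fM: "finite (rsupp (M i j k))" and fN: "finite (rsupp (N i j k))" for i j k
    using M N by (auto simp: fin_def)
  have "mphi \<psi> (mat_mult M N) i j k h = phi \<psi> (\<lambda>h. \<Sum>l<2. \<Sum>a\<le>k. rmul (M i l a) (N l j (k - a)) h) h"
    by (simp add: mphi_def mat_mult_fun)
  also have "\<dots> = (\<Sum>l<2. \<Sum>a\<le>k. phi \<psi> (rmul (M i l a) (N l j (k - a))) h)"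
    by (subst phi_sum, auto simp: fM fN finite_rsupp_rmul finite_rsupp_sum phi_sum)
  also have "\<dots> = mat_mult (mphi \<psi> M) (mphi \<psi> N) i j k h"
    by (simp add: mat_mult_def mphi_def phi_rmul[OF hom] fM fN)
  finally show "mphi \<psi> (mat_mult M N) i j k h = mat_mult (mphi \<psi> M) (mphi \<psi> N) i j k h" .
qed

lemma mphi_eq2: "eq2 M N \<Longrightarrow> eq2 (mphi \<psi> M) (mphi \<psi> N)"
  unfolding eq2_def
proof (intro allI impI ext)
  fix i j k h assume "\<forall>i<2. \<forall>j<2. M i j = N i j" "i < (2::nat)" "j < (2::nat)"
  then have "M i j = N i j" by blast
  then show "mphi \<psi> M i j k h = mphi \<psi> N i j k h" by (simp add: mphi_def)
qed

lemma fin_mphi: "fin M \<Longrightarrow> fin (mphi \<psi> M)"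
  by (simp add: fin_def mphi_def finite_rsupp_phi)

lemma mphi_one: "\<psi> ([], []) = ([], []) \<Longrightarrow> mphi \<psi> mat_one = mat_one"
  by (auto simp: mphi_def mat_one_def phi_delta phi_zero intro!: ext)

lemma mphi_rhoF: "\<psi> (f, []) = (f', []) \<Longrightarrow> \<psi> ([], []) = ([], []) \<Longrightarrow> mphi \<psi> (rhoF f) = rhoF f'"
  by (auto simp: mphi_def rhoF_def phi_delta phi_zero phi_diff rsupp_delta intro!: ext)

lemma mphi_rhoG: "\<psi> ([], g) = ([], g') \<Longrightarrow> \<psi> ([], []) = ([], []) \<Longrightarrow> mphi \<psi> (rhoG g) = rhoG g'"
  by (auto simp: mphi_def rhoG_def phi_delta phi_zero phi_diff rsupp_delta intro!: ext)

definition psi :: "letter list \<Rightarrow> letter list \<Rightarrow> word \<times> word \<Rightarrow> word \<times> word" where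
  "psi \<alpha> \<beta> p = (artin \<alpha> (fst p), artin \<beta> (snd p))"

lemma psi_hom: "psi \<alpha> \<beta> (pmul p q) = pmul (psi \<alpha> \<beta> p) (psi \<alpha> \<beta> q)"
  by (simp add: psi_def pmul_def artin_fmul)

lemma reduced_sh: "reduced g \<Longrightarrow> reduced (map (sh m) g)"
  by (metis reduce_reduced reduce_sh reduced_reduce)

lemma letter_case:
  assumes \<alpha>: "braid_word m \<alpha>" and \<beta>: "braid_word n \<beta>" and a: "fst a < m + n"
  shows "eq2 (rho m (artin (braid_tensor m \<alpha> \<beta>) [a])) (mphi (psi \<alpha> \<beta>) (rho_letter m a))"
proof (cases "fst a < m")
  case True
  have "artin (map (sh m) \<beta>) [a] = [a]"
    using True by (intro artin_id) auto
  then have A: "artin (braid_tensor m \<alpha> \<beta>) [a] = artin \<alpha> [a]"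
    by (simp add: braid_tensor_sh artin_append)
  have fr: "artin \<alpha> [a] \<in> free_group m"
    using True \<alpha> by (intro artin_free) (auto simp: free_group_def)
  have "eq2 (rho m (artin \<alpha> [a])) (rhoF (reduce (artin \<alpha> [a])))"
    using fr by (intro rho_F) (auto simp: free_group_def)
  moreover have "reduce (artin \<alpha> [a]) = artin \<alpha> [a]"
    using fr by (simp add: free_group_def reduce_reduced)
  moreover have "mphi (psi \<alpha> \<beta>) (rho_letter m a) = rhoF (artin \<alpha> [a])"
    using True by (simp add: rho_letter_def mphi_rhoF psi_def)
  ultimately show ?thesis using A by simp
next
  case False
  define a' where "a' = (fst a - m, snd a)"
  have aa: "a = sh m a'" using False by (simp add: a'_def sh_def)
  define g where "g = artin \<beta> [a']"
  have fr: "g \<in> free_group n"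
    unfolding g_def using \<beta> a False by (intro artin_free) (auto simp: free_group_def a'_def)
  have "artin (map (sh m) \<beta>) [a] = map (sh m) g"
    using artin_sh[of m \<beta> "[a']"] by (simp add: aa g_def)
  moreover have "artin \<alpha> (map (sh m) g) = map (sh m) g"
    using \<alpha> fr by (intro artin_id reduced_sh) (auto simp: braid_word_def free_group_def)
  ultimately have A: "artin (braid_tensor m \<alpha> \<beta>) [a] = map (sh m) g"
    by (simp add: braid_tensor_sh artin_append)
  have "eq2 (rho m (map (sh m) g)) (rhoG (reduce g))" by (rule rho_G)
  moreover have "reduce g = g" using fr by (simp add: free_group_def reduce_reduced)
  moreover have "mphi (psi \<alpha> \<beta>) (rho_letter m a) = rhoG g"
    using False by (simp add: rho_letter_def mphi_rhoG psi_def g_def a'_def)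
  ultimately show ?thesis using A by simp
qed

lemma main_rho:
  assumes \<alpha>: "braid_word m \<alpha>" and \<beta>: "braid_word n \<beta>"
  shows "w \<in> free_group (m + n) \<Longrightarrow>
    eq2 (rho m (artin (braid_tensor m \<alpha> \<beta>) w)) (mphi (psi \<alpha> \<beta>) (rho m w))"
proof (induction w)
  case Nil
  then show ?case by (simp add: rho_Nil mphi_one psi_def)
next
  case (Cons a w)
  let ?A = "artin (braid_tensor m \<alpha> \<beta>)" and ?P = "mphi (psi \<alpha> \<beta>)"
  have w: "w \<in> free_group (m + n)" and a: "fst a < m + n"
    using Cons.prems by (auto simp: free_group_def dest: reduced_tl)
  have "a # w = fmul [a] w"
    using Cons.prems by (simp add: fmul_def reduce_reduced free_group_def)
  then have "?A (a # w) = fmul (?A [a]) (?A w)" by (simp add: artin_fmul)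
  then have "eq2 (rho m (?A (a # w))) (mat_mult (rho m (?A [a])) (rho m (?A w)))"
    by (simp add: rho_fmul)
  moreover have "eq2 (mat_mult (rho m (?A [a])) (rho m (?A w))) (mat_mult (?P (rho_letter m a)) (?P (rho m w)))"
    using letter_case[OF \<alpha> \<beta> a] Cons.IH[OF w] by (rule eq2_mult)
  moreover have "mat_mult (?P (rho_letter m a)) (?P (rho m w)) = ?P (rho m (a # w))"
    by (simp add: rho_Cons mphi_mult psi_hom fin_rho fin_rho_letter)
  ultimately show ?case by (metis eq2_trans)
qed




lemma phi_at:
  assumes "rsupp r \<subseteq> X" "inj_on \<psi> X" "h \<in> X"
  shows "phi \<psi> r (\<psi> h) = r h"
proof -
  have "{h'. r h' \<noteq> 0 \<and> \<psi> h' = \<psi> h} = (if r h \<noteq> 0 then {h} else {})"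
    using assms by (auto simp: rsupp_def inj_on_def)
  then show ?thesis by (simp add: phi_def)
qed

lemma phi_zero_iff:
  assumes "rsupp r \<subseteq> X" "inj_on \<psi> X"
  shows "(phi \<psi> r = (\<lambda>_. 0)) \<longleftrightarrow> (r = (\<lambda>_. 0))"
proof
  assume z: "phi \<psi> r = (\<lambda>_. 0)"
  show "r = (\<lambda>_. 0)"
  proof (rule ext, rule ccontr)
    fix h assume "r h \<noteq> 0"
    then have "h \<in> X" using assms by (auto simp: rsupp_def)
    then have "phi \<psi> r (\<psi> h) = r h" using phi_at assms by blast
    then show False using z \<open>r h \<noteq> 0\<close> by simp
  qed
qed (simp add: phi_zero)

definition lexpres :: "(word \<Rightarrow> word \<Rightarrow> bool) \<Rightarrow> (word \<Rightarrow> word \<Rightarrow> bool) \<Rightarrow> (word \<times> word \<Rightarrow> word \<times> word) \<Rightarrow> (word \<times> word) set \<Rightarrow> bool" where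
  "lexpres lt1 lt2 \<psi> X \<longleftrightarrow> (\<forall>h\<in>X. \<forall>h'\<in>X. lex_lt lt1 lt2 h' h \<longrightarrow> lex_lt lt1 lt2 (\<psi> h') (\<psi> h))"

lemma rpos_phi:
  assumes "rsupp r \<subseteq> X" "inj_on \<psi> X" "lexpres lt1 lt2 \<psi> X" "rpos lt1 lt2 r"
  shows "rpos lt1 lt2 (phi \<psi> r)"
proof -
  obtain h where h: "r h > 0" "\<forall>h'. r h' \<noteq> 0 \<longrightarrow> h' = h \<or> lex_lt lt1 lt2 h' h"
    using assms(4) by (auto simp: rpos_def)
  have hX: "h \<in> X" using h(1) assms(1) by (auto simp: rsupp_def)
  have "phi \<psi> r (\<psi> h) > 0" using phi_at[OF assms(1,2) hX] h(1) by simp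
  moreover have "h'' = \<psi> h \<or> lex_lt lt1 lt2 h'' (\<psi> h)" if "phi \<psi> r h'' \<noteq> 0" for h''
  proof -
    have "h'' \<in> \<psi> ` rsupp r" using that rsupp_phi[of \<psi> r] by (auto simp: rsupp_def)
    then obtain h' where h': "h'' = \<psi> h'" "r h' \<noteq> 0" by (auto simp: rsupp_def)
    then have "h' \<in> X" using assms(1) by (auto simp: rsupp_def)
    then show ?thesis using h' h(2) hX assms(3) unfolding lexpres_def by blast
  qed
  ultimately show ?thesis unfolding rpos_def by blast
qed

lemma find_cong_set: "(\<forall>x\<in>set xs. P x = Q x) \<Longrightarrow> find P xs = find Q xs"
  by (induction xs) auto

lemma find_Some_set: "find P xs = Some x \<Longrightarrow> x \<in> set xs"
  by (induction xs) (auto split: if_splits)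

lemma set_positions: "set positions = {(0, 0), (1, 1), (0, 1), (1, 0)}"
  by (simp add: positions_def)

lemma mat_pos_intro:
  assumes "\<And>k' a b. k' < k \<Longrightarrow> (a, b) \<in> set positions \<Longrightarrow> M a b k' = (\<lambda>_. 0)"
    "find (\<lambda>(i', j'). M i' j' k \<noteq> (\<lambda>_. 0)) positions = Some (i, j)" "rpos lt1 lt2 (M i j k)"
  shows "mat_pos lt1 lt2 M"
proof -
  have "\<forall>k'<k. \<forall>(i', j')\<in>set positions. M i' j' k' = (\<lambda>_. 0)"
  proof (intro allI impI ballI)
    fix k' p assume "k' < k" "p \<in> set positions"
    then show "case p of (i', j') \<Rightarrow> M i' j' k' = (\<lambda>_. 0)" using assms(1) by (cases p) simp
  qed
  then show ?thesis unfolding mat_pos_def using assms(2,3) by blast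
qed

lemma mat_pos_elim:
  assumes "mat_pos lt1 lt2 M"
  obtains k i j where "\<And>k' a b. k' < k \<Longrightarrow> (a, b) \<in> set positions \<Longrightarrow> M a b k' = (\<lambda>_. 0)"
    "find (\<lambda>(i', j'). M i' j' k \<noteq> (\<lambda>_. 0)) positions = Some (i, j)" "rpos lt1 lt2 (M i j k)"
proof -
  obtain k i j where k: "\<forall>k'<k. \<forall>(i', j')\<in>set positions. M i' j' k' = (\<lambda>_. 0)"
    "find (\<lambda>(i', j'). M i' j' k \<noteq> (\<lambda>_. 0)) positions = Some (i, j)" "rpos lt1 lt2 (M i j k)"
    using assms unfolding mat_pos_def by blast
  have "M a b k' = (\<lambda>_. 0)" if "k' < k" "(a, b) \<in> set positions" for k' a b
    using k(1) that by fastforce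
  then show ?thesis using k(2,3) that by blast
qed

lemma mat_pos_eq2:
  assumes "eq2 M N" "mat_pos lt1 lt2 M"
  shows "mat_pos lt1 lt2 N"
proof -
  have e: "M i j = N i j" if "(i, j) \<in> set positions" for i j
    using assms(1) that by (auto simp: eq2_def set_positions)
  obtain k i j where k: "\<And>k' a b. k' < k \<Longrightarrow> (a, b) \<in> set positions \<Longrightarrow> M a b k' = (\<lambda>_. 0)"
    "find (\<lambda>(i', j'). M i' j' k \<noteq> (\<lambda>_. 0)) positions = Some (i, j)" "rpos lt1 lt2 (M i j k)"
    using mat_pos_elim[OF assms(2)] by blast
  have pin: "(i, j) \<in> set positions" using k(2) by (rule find_Some_set)
  have "find (\<lambda>(i', j'). N i' j' k \<noteq> (\<lambda>_. 0)) positions = find (\<lambda>(i', j'). M i' j' k \<noteq> (\<lambda>_. 0)) positions"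
    by (rule find_cong_set) (auto simp: e)
  then show ?thesis
    using k e pin by (intro mat_pos_intro[where k=k and i=i and j=j]) auto
qed

lemma mat_pos_mphi:
  assumes "suppin X M" "inj_on \<psi> X" "lexpres lt1 lt2 \<psi> X" "mat_pos lt1 lt2 M"
  shows "mat_pos lt1 lt2 (mphi \<psi> M)"
proof -
  have z: "(mphi \<psi> M i j k = (\<lambda>_. 0)) \<longleftrightarrow> (M i j k = (\<lambda>_. 0))" for i j k
    using phi_zero_iff[of "M i j k" X \<psi>] assms(1,2) by (simp add: mphi_def suppin_def)
  obtain k i j where k: "\<And>k' a b. k' < k \<Longrightarrow> (a, b) \<in> set positions \<Longrightarrow> M a b k' = (\<lambda>_. 0)"
    "find (\<lambda>(i', j'). M i' j' k \<noteq> (\<lambda>_. 0)) positions = Some (i, j)" "rpos lt1 lt2 (M i j k)"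
    using mat_pos_elim[OF assms(4)] by blast
  have "find (\<lambda>(i', j'). mphi \<psi> M i' j' k \<noteq> (\<lambda>_. 0)) positions = Some (i, j)"
    using k(2) by (simp add: z)
  moreover have "rpos lt1 lt2 (mphi \<psi> M i j k)"
    using rpos_phi[OF _ assms(2,3) k(3)] assms(1) by (simp add: mphi_def suppin_def)
  ultimately show ?thesis
    using k z by (intro mat_pos_intro[where k=k and i=i and j=j]) auto
qed

lemma artin_inj:
  assumes "bi_order m lt" "braid_word m bw" "preserves m lt bw"
    "f \<in> free_group m" "f' \<in> free_group m" "artin bw f = artin bw f'"
  shows "f = f'"
proof (rule ccontr)
  assume "f \<noteq> f'"
  then have "lt f f' \<or> lt f' f" using assms(1,4,5) by (simp add: bi_order_def)
  then have "lt (artin bw f) (artin bw f') \<or> lt (artin bw f') (artin bw f)"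
    using assms(3,4,5) by (auto simp: preserves_def)
  moreover have "artin bw f \<in> free_group m" using assms(2,4) by (rule artin_free)
  ultimately show False using assms(1,6) by (auto simp: bi_order_def)
qed

lemma psi_inj:
  assumes "bi_order m lt1" "bi_order n lt2" "braid_word m \<alpha>" "braid_word n \<beta>"
    "preserves m lt1 \<alpha>" "preserves n lt2 \<beta>"
  shows "inj_on (psi \<alpha> \<beta>) (DD m n)"
  unfolding inj_on_def psi_def DD_def
  using artin_inj[OF assms(1,3,5)] artin_inj[OF assms(2,4,6)] by (auto simp: prod_eq_iff)

lemma psi_lexpres:
  assumes "preserves m lt1 \<alpha>" "preserves n lt2 \<beta>"
  shows "lexpres lt1 lt2 (psi \<alpha> \<beta>) (DD m n)"
  using assms unfolding lexpres_def lex_lt_def psi_def DD_def preserves_def by auto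


lemma eq2_sub: "eq2 M M' \<Longrightarrow> eq2 N N' \<Longrightarrow> eq2 (mat_sub M N) (mat_sub M' N')"
  unfolding eq2_def by (auto simp: mat_sub_def fun_eq_iff)

lemma mat_sub_fun: "mat_sub M N i j k = (\<lambda>h. M i j k h - N i j k h)"
  by (rule ext) (simp add: mat_sub_def)

lemma mphi_sub: "fin M \<Longrightarrow> fin N \<Longrightarrow> mphi \<psi> (mat_sub M N) = mat_sub (mphi \<psi> M) (mphi \<psi> N)"
proof (intro ext)
  fix i j k h assume "fin M" "fin N"
  then show "mphi \<psi> (mat_sub M N) i j k h = mat_sub (mphi \<psi> M) (mphi \<psi> N) i j k h"
    using phi_diff[of "M i j k" "N i j k" \<psi>]
    by (simp add: mphi_def mat_sub_fun fin_def)
qed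

lemma suppin_sub: "suppin X M \<Longrightarrow> suppin X N \<Longrightarrow> suppin X (mat_sub M N)"
  unfolding suppin_def mat_sub_def using rsupp_diff by blast

theorem proposition6p2:
  fixes m n :: nat
    and lt1 lt2 :: "word \<Rightarrow> word \<Rightarrow> bool"
    and \<alpha> \<beta> :: "letter list"
  assumes "bi_order m lt1" and "bi_order n lt2"
    and "braid_word m \<alpha>" and "braid_word n \<beta>"
    and "preserves m lt1 \<alpha>" and "preserves n lt2 \<beta>"
  shows "preserves (m + n) (prec m lt1 lt2) (braid_tensor m \<alpha> \<beta>)"
  unfolding preserves_def prec_def
proof (intro ballI impI)
  fix x y assume x: "x \<in> free_group (m + n)" and y: "y \<in> free_group (m + n)"
    and pos: "mat_pos lt1 lt2 (mat_sub (rho m y) (rho m x))"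
  let ?A = "artin (braid_tensor m \<alpha> \<beta>)" and ?\<psi> = "psi \<alpha> \<beta>"
  have sx: "suppin (DD m n) (rho m x)"
    using x by (intro suppin_rho_DD) (simp add: free_group_def)
  have sy: "suppin (DD m n) (rho m y)"
    using y by (intro suppin_rho_DD) (simp add: free_group_def)
  have P1: "mat_pos lt1 lt2 (mphi ?\<psi> (mat_sub (rho m y) (rho m x)))"
    by (rule mat_pos_mphi[OF suppin_sub[OF sy sx] psi_inj[OF assms] psi_lexpres[OF assms(5,6)] pos])
  have P2: "mphi ?\<psi> (mat_sub (rho m y) (rho m x)) = mat_sub (mphi ?\<psi> (rho m y)) (mphi ?\<psi> (rho m x))"
    by (rule mphi_sub[OF fin_rho fin_rho])
  have P3: "eq2 (mat_sub (mphi ?\<psi> (rho m y)) (mphi ?\<psi> (rho m x))) (mat_sub (rho m (?A y)) (rho m (?A x)))"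
    by (rule eq2_sub[OF eq2_sym[OF main_rho[OF assms(3,4) y]] eq2_sym[OF main_rho[OF assms(3,4) x]]])
  show "mat_pos lt1 lt2 (mat_sub (rho m (?A y)) (rho m (?A x)))"
    using mat_pos_eq2[OF P3] P1 P2 by simp
qed


end
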